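(* For $n\ge1$, \[\frac{2^n\,A_{n+1}(z)}{z}=\sum_{k=0}^{n}\binom nk B_k(z)\,B_{n-k}(z).\]
   Context: $A_n(z)=\sum_{\sigma\in\mathfrak S_n}z^{\mathrm{des}(\sigma)+1}$, where $\mathrm{des}(\sigma)=\#\{i\in[n-1]:\sigma_i>\sigma_{i+1}\}$. $\mathfrak B_k$ is the set of signed permutations $\pi=\pi_1\cdots\pi_k$ (words over $\{\pm1,\dots,\pm k\}$ with $|\pi_1|,\dots,|\pi_k|$ a permutation of $[k]$), compared as integers, with $\pi_0=0$; $\mathrm{des}_B(\pi)=\#\{i\in\{0,\dots,k-1\}:\pi_i>\pi_{i+1}\}$ and $B_k(z)=\sum_{\pi\in\mathfrak B_k}z^{\mathrm{des}_B(\pi)}$, with $B_0(z)=1$. *)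

theory Defs
  imports Complex_Main
begin

(* Permutations of [n] in one-line notation: lists sigma_1 ... sigma_n (0-indexed list). *)
definition perms :: "nat \<Rightarrow> nat list set" where
  "perms n = {s. distinct s \<and> set s = {1..n}}"

definition des :: "nat list \<Rightarrow> nat" where
  "des s = card {i. i + 1 < length s \<and> s ! i > s ! (i + 1)}"

definition eulerA :: "nat \<Rightarrow> real \<Rightarrow> real" where
  "eulerA n z = (\<Sum>s\<in>perms n. z ^ (des s + 1))"

definition signed_perms :: "nat \<Rightarrow> int list set" where
  "signed_perms k = {p. distinct (map abs p) \<and> set (map abs p) = int ` {1..k}}"

definition desB :: "int list \<Rightarrow> nat" where
  "desB p = (let q = 0 # p in card {i. i + 1 < length q \<and> q ! i > q ! (i + 1)})"

definition eulerB :: "nat \<Rightarrow> real \<Rightarrow> real" where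
  "eulerB k z = (\<Sum>p\<in>signed_perms k. z ^ desB p)"

end

theory Submission
  imports Defs "HOL-Computational_Algebra.Polynomial_FPS"
begin

unbundle fps_syntax

fun desr :: "'a::linorder list \<Rightarrow> nat" where
  "desr (a # b # xs) = (if a > b then 1 else 0) + desr (b # xs)"
| "desr _ = 0"

lemma card_split0:
  assumes "finite {i. P (Suc i)}"
  shows "card {i. P i} = (if P 0 then 1 else 0) + card {i. P (Suc i)}"
proof -
  have eq: "{i. P i} = (if P 0 then {0} else {}) \<union> Suc ` {i. P (Suc i)}"
    apply (rule set_eqI)
    subgoal for x by (cases x) auto
    done
  have "card ((if P 0 then {0} else {}) \<union> Suc ` {i. P (Suc i)}) =
        card (if P 0 then {0::nat} else {}) + card (Suc ` {i. P (Suc i)})"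
    by (rule card_Un_disjoint) (use assms in auto)
  also have "card (Suc ` {i. P (Suc i)}) = card {i. P (Suc i)}"
    by (simp add: card_image)
  finally show ?thesis using eq by simp
qed

lemma card_des_eq:
  "card {i. i + 1 < length q \<and> q ! i > q ! (i+1)} = desr (q :: 'a::linorder list)"
proof (induction q rule: desr.induct)
  case (1 a b xs)
  have fin: "finite {i. Suc i + 1 < length (a # b # xs) \<and> (a # b # xs) ! Suc i > (a # b # xs) ! (Suc i + 1)}"
    by (rule finite_subset[of _ "{..<length (a#b#xs)}"]) auto
  show ?case
    apply (subst card_split0[OF fin])
    using 1 by simp
next
  case "2_1" then show ?case by simp
next
  case "2_2" then show ?case by simp
qed

lemma desr_Cons: "desr (a # ys) = desr ys + (if ys \<noteq> [] \<and> a > hd ys then 1 else 0)"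
  by (cases ys) auto

lemma desr_append:
  "desr (xs @ ys) = desr xs + desr ys + (if xs \<noteq> [] \<and> ys \<noteq> [] \<and> last xs > hd ys then 1 else 0)"
proof (induction xs)
  case Nil then show ?case by simp
next
  case (Cons a xs)
  show ?case
  proof (cases "xs = []")
    case True then show ?thesis by (simp add: desr_Cons)
  next
    case False
    then show ?thesis using Cons.IH by (simp del: desr.simps add: desr_Cons)
  qed
qed

lemma desr_ins_max:
  assumes "\<forall>v \<in> set xs \<union> set ys. v < y"
  shows "desr (xs @ y # ys) + (if xs \<noteq> [] \<and> ys \<noteq> [] \<and> last xs > hd ys then 1 else 0)
       = desr (xs @ ys) + (if ys \<noteq> [] then 1 else 0)"
proof -
  have "xs \<noteq> [] \<Longrightarrow> last xs < y" using assms by auto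
  moreover have "ys \<noteq> [] \<Longrightarrow> hd ys < y" using assms by auto
  ultimately show ?thesis
    by (auto simp: desr_append desr_Cons dest: less_asym)
qed

lemma desr_ins_min:
  assumes "\<forall>v \<in> set xs \<union> set ys. v > y"
  shows "desr (xs @ y # ys) + (if xs \<noteq> [] \<and> ys \<noteq> [] \<and> last xs > hd ys then 1 else 0)
       = desr (xs @ ys) + (if xs \<noteq> [] then 1 else 0)"
proof -
  have "xs \<noteq> [] \<Longrightarrow> last xs > y" using assms by auto
  moreover have "ys \<noteq> [] \<Longrightarrow> hd ys > y" using assms by auto
  ultimately show ?thesis
    by (auto simp: desr_append desr_Cons dest: less_asym)
qed

lemma sum_if_count:
  fixes a b :: "'b::comm_ring_1"
  assumes "finite A"
  shows "(\<Sum>x\<in>A. if P x then a else b) = of_nat (card {x\<in>A. P x}) * a + of_nat (card A - card {x\<in>A. P x}) * b"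
  using assms
proof (induction A rule: finite_induct)
  case empty then show ?case by simp
next
  case (insert x F)
  have le: "card {x\<in>F. P x} \<le> card F" using insert by (intro card_mono) auto
  have finF: "finite {y\<in>F. P y}" using insert by auto
  show ?case
  proof (cases "P x")
    case True
    have e1: "{y \<in> insert x F. P y} = insert x {y\<in>F. P y}" using True by auto
    have c1: "card {y \<in> insert x F. P y} = Suc (card {y\<in>F. P y})"
      unfolding e1 using finF insert by simp
    have c2: "card (insert x F) - card {y \<in> insert x F. P y} = card F - card {y\<in>F. P y}"
      unfolding c1 using insert by simp
    show ?thesis unfolding c2 c1 using insert True by (simp add: algebra_simps)
  next
    case False
    have e1: "{y \<in> insert x F. P y} = {y\<in>F. P y}" using False by auto
    have c2: "card (insert x F) - card {y \<in> insert x F. P y} = Suc (card F - card {y\<in>F. P y})"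
      unfolding e1 using insert le by (simp add: Suc_diff_le)
    show ?thesis unfolding c2 using insert False e1 by (simp add: algebra_simps)
  qed
qed


lemma perms_len: "s \<in> perms n \<Longrightarrow> length s = n"
  unfolding perms_def using distinct_card by fastforce

lemma des_alt: "des s = desr s"
  unfolding des_def by (rule card_des_eq)

lemma des_le: "des s \<le> length s"
proof -
  have "des s \<le> card {..<length s}"
    unfolding des_def by (rule card_mono) auto
  then show ?thesis by simp
qed

lemma take_drop_facts:
  assumes "j \<le> length s"
  shows "(take j s \<noteq> []) = (0 < j)" "(drop j s \<noteq> []) = (j < length s)"
    "j < length s \<Longrightarrow> hd (drop j s) = s ! j"
  using assms by (auto simp: hd_drop_conv_nth)

lemma last_take_nth: "0 < j \<Longrightarrow> j \<le> length s \<Longrightarrow> last (take j s) = s ! (j - 1)"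
proof -
  assume a: "0 < j" "j \<le> length s"
  then have ne: "take j s \<noteq> []" by auto
  have "length (take j s) = j" using a by simp
  then show ?thesis using last_conv_nth[OF ne] a by simp
qed

lemma des_insA:
  assumes s: "s \<in> perms n" and j: "j \<le> n"
  shows "des (take j s @ Suc n # drop j s) =
     (if (0 < j \<and> j < n \<and> s ! (j - 1) > s ! j) \<or> j = n then des s else des s + 1)"
proof -
  have len: "length s = n" using perms_len[OF s] .
  have "\<forall>v \<in> set (take j s) \<union> set (drop j s). v < Suc n"
    using s unfolding perms_def
    by (auto dest: in_set_takeD in_set_dropD)
  from desr_ins_max[OF this] have
    "desr (take j s @ Suc n # drop j s) + (if take j s \<noteq> [] \<and> drop j s \<noteq> [] \<and> last (take j s) > hd (drop j s) then 1 else 0)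
       = desr s + (if drop j s \<noteq> [] then 1 else 0)" by simp
  then show ?thesis using take_drop_facts[of j s] last_take_nth[of j s] j len
    by (auto simp: des_alt split: if_splits)
qed

lemma card_descA:
  assumes "length s = n"
  shows "card {j \<in> {0..n}. 0 < j \<and> j < n \<and> s ! (j - 1) > s ! j} = des s"
proof -
  have "{j \<in> {0..n}. 0 < j \<and> j < n \<and> s ! (j - 1) > s ! j} = Suc ` {i. i + 1 < length s \<and> s ! i > s ! (i+1)}"
    using assms
    apply (auto simp: image_iff)
    subgoal for x by (rule exI[of _ "x - 1"]) auto
    done
  then show ?thesis unfolding des_def by (simp add: card_image)
qed

lemma ins_sum_A:
  assumes s: "s \<in> perms n"
  shows "(\<Sum>j=0..n. (fps_X::real fps) ^ (des (take j s @ Suc n # drop j s) + 1))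
     = of_nat (des s + 1) * fps_X ^ (des s + 1) + of_nat (n - des s) * fps_X ^ (des s + 2)"
proof -
  let ?c = "\<lambda>j. (0 < j \<and> j < n \<and> s ! (j - 1) > s ! j) \<or> j = n"
  have len: "length s = n" using perms_len[OF s] .
  have "(\<Sum>j=0..n. (fps_X::real fps) ^ (des (take j s @ Suc n # drop j s) + 1))
      = (\<Sum>j=0..n. if ?c j then fps_X ^ (des s + 1) else fps_X ^ (des s + 2))"
  proof (rule sum.cong[OF refl])
    fix j assume "j \<in> {0..n}"
    then have jn: "j \<le> n" by simp
    show "(fps_X::real fps) ^ (des (take j s @ Suc n # drop j s) + 1) = (if ?c j then fps_X ^ (des s + 1) else fps_X ^ (des s + 2))"
    proof (cases "?c j")
      case True
      then have "des (take j s @ Suc n # drop j s) = des s" using des_insA[OF s jn] by simp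
      then show ?thesis using True by simp
    next
      case False
      then have "des (take j s @ Suc n # drop j s) = des s + 1" using des_insA[OF s jn] by simp
      then show ?thesis using False by (simp only: if_False) simp
    qed
  qed
  also have "\<dots> = of_nat (card {j\<in>{0..n}. ?c j}) * fps_X ^ (des s + 1)
       + of_nat (card {0..n} - card {j\<in>{0..n}. ?c j}) * fps_X ^ (des s + 2)"
    by (rule sum_if_count) simp
  also have "{j\<in>{0..n}. ?c j} = insert n {j \<in> {0..n}. 0 < j \<and> j < n \<and> s ! (j - 1) > s ! j}"
    by auto
  also have "card \<dots> = des s + 1"
    using card_descA[OF len] by simp
  finally show ?thesis by simp
qed

lemma perms_Suc:
  "perms (Suc n) = (\<lambda>(s,j). take j s @ Suc n # drop j s) ` (perms n \<times> {0..n})"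
proof (intro set_eqI iffI)
  fix t assume t: "t \<in> perms (Suc n)"
  then have "Suc n \<in> set t" unfolding perms_def by auto
  then obtain xs ys where txy: "t = xs @ Suc n # ys" using split_list by metis
  have dt: "distinct t" and st: "set t = {1..Suc n}" using t unfolding perms_def by auto
  have "xs @ ys \<in> perms n"
  proof -
    have d: "distinct (xs @ ys)" and nn: "Suc n \<notin> set (xs @ ys)" using dt txy by auto
    have "insert (Suc n) (set (xs @ ys)) = {1..Suc n}" using st txy by auto
    then have "set (xs @ ys) = {1..Suc n} - {Suc n}" using nn by blast
    also have "\<dots> = {1..n}" by auto
    finally show ?thesis using d unfolding perms_def by simp
  qed
  moreover have "length xs \<le> n" using perms_len[OF calculation] by simp
  ultimately show "t \<in> (\<lambda>(s,j). take j s @ Suc n # drop j s) ` (perms n \<times> {0..n})"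
    using txy by (intro rev_image_eqI[of "(xs @ ys, length xs)"]) auto
next
  fix t assume "t \<in> (\<lambda>(s,j). take j s @ Suc n # drop j s) ` (perms n \<times> {0..n})"
  then obtain s j where s: "s \<in> perms n" and t: "t = take j s @ Suc n # drop j s" by auto
  have ds: "distinct s" and ss: "set s = {1..n}" using s unfolding perms_def by auto
  have "distinct (take j s @ drop j s)" "set (take j s @ drop j s) = {1..n}" using ds ss by simp_all
  moreover have "Suc n \<notin> set (take j s)" "Suc n \<notin> set (drop j s)" using ss by (auto dest: in_set_takeD in_set_dropD)
  ultimately show "t \<in> perms (Suc n)" unfolding perms_def t
    by (auto simp del: append_take_drop_id)
qed

lemma perms_Suc_inj:
  "inj_on (\<lambda>(s,j). take j s @ Suc n # drop j s) (perms n \<times> {0..n})"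
proof (rule inj_onI, clarify)
  fix s j s' j'
  assume s: "s \<in> perms n" and s': "s' \<in> perms n" and j: "j \<in> {0..n}" and j': "j' \<in> {0..n}"
    and eq: "take j s @ Suc n # drop j s = take j' s' @ Suc n # drop j' s'"
  have n1: "Suc n \<notin> set (take j s)" "Suc n \<notin> set (drop j s)"
    using s unfolding perms_def by (auto dest: in_set_takeD in_set_dropD)
  from eq have tk: "take j s = take j' s'" and dr: "drop j s = drop j' s'"
    using append_Cons_eq_iff[OF n1] by auto
  have l1: "length s = n" and l2: "length s' = n" using s s' perms_len by auto
  have "s = take j s @ drop j s" by simp
  also have "\<dots> = take j' s' @ drop j' s'" using tk dr by simp
  also have "\<dots> = s'" by simp
  finally have ss: "s = s'" .
  have "j = length (take j s)" using j l1 by simp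
  also have "\<dots> = length (take j' s')" using tk by simp
  also have "\<dots> = j'" using j' l2 by simp
  finally show "s = s' \<and> j = j'" using ss by simp
qed

lemma deriv_Xpow_Suc: "fps_deriv ((fps_X::'a::comm_ring_1 fps) ^ (m + 1)) = of_nat (m + 1) * fps_X ^ m"
  using fps_deriv_power'[of "fps_X::'a fps" "m+1"] by simp

definition FA :: "nat \<Rightarrow> real fps" where
  "FA n = (\<Sum>s\<in>perms n. fps_X ^ (des s + 1))"

lemma FA_rec:
  "FA (Suc n) = of_nat (Suc n) * fps_X * FA n + fps_X * (1 - fps_X) * fps_deriv (FA n)"
proof -
  have "FA (Suc n) = (\<Sum>(s,j)\<in>perms n \<times> {0..n}. fps_X ^ (des (take j s @ Suc n # drop j s) + 1))"
    unfolding FA_def perms_Suc by (subst sum.reindex[OF perms_Suc_inj]) (simp add: case_prod_unfold)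
  also have "\<dots> = (\<Sum>s\<in>perms n. \<Sum>j=0..n. fps_X ^ (des (take j s @ Suc n # drop j s) + 1))"
    by (rule sum.cartesian_product[symmetric])
  also have "\<dots> = (\<Sum>s\<in>perms n. of_nat (Suc n) * fps_X * fps_X ^ (des s + 1)
        + fps_X * (1 - fps_X) * fps_deriv (fps_X ^ (des s + 1)))"
  proof (rule sum.cong[OF refl])
    fix s assume s: "s \<in> perms n"
    have le: "des s \<le> n" using des_le[of s] perms_len[OF s] by simp
    have dfact: "fps_deriv ((fps_X::real fps) ^ (des s + 1)) = of_nat (des s + 1) * fps_X ^ des s"
      by (rule deriv_Xpow_Suc)
    then show "(\<Sum>j=0..n. fps_X ^ (des (take j s @ Suc n # drop j s) + 1)) =
         of_nat (Suc n) * fps_X * fps_X ^ (des s + 1) + fps_X * (1 - fps_X) * fps_deriv ((fps_X::real fps) ^ (des s + 1))"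
    proof -
      have p1: "(fps_X::real fps) ^ (des s + 1) = fps_X * fps_X ^ des s" by simp
      have p2: "(fps_X::real fps) ^ (des s + 2) = fps_X * fps_X * fps_X ^ des s" by (simp add: power2_eq_square)
      show ?thesis unfolding ins_sum_A[OF s] dfact unfolding p1 p2
        using le by (simp add: of_nat_diff algebra_simps)
    qed
  qed
  also have "\<dots> = of_nat (Suc n) * fps_X * FA n + fps_X * (1 - fps_X) * fps_deriv (FA n)"
    unfolding FA_def by (simp only: sum.distrib sum_distrib_left fps_deriv_sum)
  finally show ?thesis .
qed

lemma FA_0: "FA 0 = fps_X"
proof -
  have "perms 0 = {[]}" unfolding perms_def by auto
  then show ?thesis unfolding FA_def by (simp add: des_def)
qed


lemma sp_len: "p \<in> signed_perms k \<Longrightarrow> length p = k"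
proof -
  assume p: "p \<in> signed_perms k"
  then have "length (map abs p) = card (set (map abs p))" unfolding signed_perms_def
    using distinct_card by fastforce
  also have "\<dots> = card (int ` {1..k})" using p unfolding signed_perms_def by simp
  also have "\<dots> = k" by (simp add: card_image)
  finally show ?thesis by simp
qed

lemma sp_abs: "p \<in> signed_perms k \<Longrightarrow> v \<in> set p \<Longrightarrow> \<bar>v\<bar> \<le> int k"
proof -
  assume p: "p \<in> signed_perms k" and v: "v \<in> set p"
  then have "\<bar>v\<bar> \<in> set (map abs p)" by simp
  then have "\<bar>v\<bar> \<in> int ` {1..k}" using p unfolding signed_perms_def by simp
  then show ?thesis by auto
qed

lemma desB_alt: "desB p = desr (0 # p)"
  unfolding desB_def Let_def by (rule card_des_eq)

lemma desB_le: "desB p \<le> length p"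
proof -
  have "desB p \<le> card {..<length p}"
    unfolding desB_def Let_def by (rule card_mono) auto
  then show ?thesis by simp
qed

lemma desB_ins:
  assumes p: "p \<in> signed_perms k" and j: "j \<le> k"
  shows "desB (take j p @ (int k + 1) # drop j p) =
     (if (j < k \<and> (0#p) ! j > (0#p) ! (j+1)) \<or> j = k then desB p else desB p + 1)"
    "desB (take j p @ (- (int k + 1)) # drop j p) =
     (if (j < k \<and> (0#p) ! j > (0#p) ! (j+1)) then desB p else desB p + 1)"
proof -
  let ?q = "0 # p"
  have len: "length p = k" using sp_len[OF p] .
  have bnd: "\<forall>v \<in> set ?q. \<bar>v\<bar> \<le> int k" using sp_abs[OF p] by auto
  have jj: "Suc j \<le> length ?q" using j len by simp
  have e: "0 # (take j p @ y # drop j p) = take (Suc j) ?q @ y # drop (Suc j) ?q" for y :: int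
    by simp
  have s1: "\<forall>v \<in> set (take (Suc j) ?q) \<union> set (drop (Suc j) ?q). v < int k + 1"
    using bnd by (auto dest!: in_set_takeD in_set_dropD)
  have s2: "\<forall>v \<in> set (take (Suc j) ?q) \<union> set (drop (Suc j) ?q). v > - (int k + 1)"
    using bnd by (auto dest!: in_set_takeD in_set_dropD)
  have f: "take (Suc j) ?q \<noteq> []" "(drop (Suc j) ?q \<noteq> []) = (j < k)"
    "last (take (Suc j) ?q) = ?q ! j" "j < k \<Longrightarrow> hd (drop (Suc j) ?q) = ?q ! (j+1)"
    using take_drop_facts[OF jj] last_take_nth[of "Suc j" ?q] jj len by auto
  from desr_ins_max[OF s1] show "desB (take j p @ (int k + 1) # drop j p) =
     (if (j < k \<and> (0#p) ! j > (0#p) ! (j+1)) \<or> j = k then desB p else desB p + 1)"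
    unfolding desB_alt e using f j by (auto split: if_splits)
  from desr_ins_min[OF s2] show "desB (take j p @ (- (int k + 1)) # drop j p) =
     (if (j < k \<and> (0#p) ! j > (0#p) ! (j+1)) then desB p else desB p + 1)"
    unfolding desB_alt e using f j by (auto split: if_splits)
qed

lemma card_descB:
  assumes "length p = k"
  shows "card {j \<in> {0..k}. j < k \<and> (0#p) ! j > (0#p) ! (j+1)} = desB p"
proof -
  have "{j \<in> {0..k}. j < k \<and> (0#p) ! j > (0#p) ! (j+1)} = {i. i + 1 < length (0#p) \<and> (0#p) ! i > (0#p) ! (i+1)}"
    using assms by auto
  then show ?thesis unfolding desB_def Let_def by simp
qed

lemma ins_sum_B:
  assumes p: "p \<in> signed_perms k"
  shows "(\<Sum>j=0..k. (fps_X::real fps) ^ desB (take j p @ (int k + 1) # drop j p)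
              + fps_X ^ desB (take j p @ (- (int k + 1)) # drop j p))
     = of_nat (2 * desB p + 1) * fps_X ^ desB p + of_nat (2 * k + 1 - 2 * desB p) * fps_X ^ (desB p + 1)"
proof -
  let ?c = "\<lambda>j. (j < k \<and> (0#p) ! j > (0#p) ! (j+1))"
  have len: "length p = k" using sp_len[OF p] .
  have le: "desB p \<le> k" using desB_le[of p] len by simp
  have cd: "card {j\<in>{0..k}. ?c j} = desB p" using card_descB[OF len] .
  have "(\<Sum>j=0..k. (fps_X::real fps) ^ desB (take j p @ (int k + 1) # drop j p)
              + fps_X ^ desB (take j p @ (- (int k + 1)) # drop j p))
      = (\<Sum>j=0..k. if ?c j \<or> j = k then fps_X ^ desB p else fps_X ^ (desB p + 1))
      + (\<Sum>j=0..k. if ?c j then fps_X ^ desB p else fps_X ^ (desB p + 1))"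
    unfolding sum.distrib[symmetric]
  proof (rule sum.cong[OF refl])
    fix j assume "j \<in> {0..k}"
    then have jn: "j \<le> k" by simp
    show "(fps_X::real fps) ^ desB (take j p @ (int k + 1) # drop j p)
              + fps_X ^ desB (take j p @ (- (int k + 1)) # drop j p) =
        (if ?c j \<or> j = k then fps_X ^ desB p else fps_X ^ (desB p + 1)) +
        (if ?c j then fps_X ^ desB p else fps_X ^ (desB p + 1))"
      by (simp only: desB_ins[OF p jn] if_distrib[where f="\<lambda>x. (fps_X::real fps) ^ x"])
  qed
  also have "\<dots> = (of_nat (card {j\<in>{0..k}. ?c j \<or> j = k}) * fps_X ^ desB p
       + of_nat (card {0..k} - card {j\<in>{0..k}. ?c j \<or> j = k}) * fps_X ^ (desB p + 1))
       + (of_nat (card {j\<in>{0..k}. ?c j}) * fps_X ^ desB p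
       + of_nat (card {0..k} - card {j\<in>{0..k}. ?c j}) * fps_X ^ (desB p + 1))"
    by (simp only: sum_if_count[OF finite_atLeastAtMost])
  also have "{j\<in>{0..k}. ?c j \<or> j = k} = insert k {j\<in>{0..k}. ?c j}"
    by auto
  also have "card \<dots> = desB p + 1"
    using cd by simp
  finally show ?thesis using le cd
    by (simp add: of_nat_diff algebra_simps)
qed

lemma sp_Suc:
  "signed_perms (Suc k) = (\<lambda>(p,j,e). take j p @ (e * (int k + 1)) # drop j p) ` (signed_perms k \<times> {0..k} \<times> {1,-1})"
proof (intro set_eqI iffI)
  fix t assume t: "t \<in> signed_perms (Suc k)"
  have dt: "distinct (map abs t)" and st: "set (map abs t) = int ` {1..Suc k}"
    using t unfolding signed_perms_def by auto
  have "int k + 1 \<in> int ` {1..Suc k}" using imageI[of "Suc k" "{1..Suc k}" int] by (simp add: add.commute)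
  then have "int k + 1 \<in> set (map abs t)" using st by simp
  then obtain x where x: "x \<in> set t" "\<bar>x\<bar> = int k + 1" by auto
  then obtain xs ys where txy: "t = xs @ x # ys" using split_list by metis
  define e where "e = sgn x"
  have e1: "e \<in> {1, -1}" and xe: "x = e * (int k + 1)" using x unfolding e_def
    by (auto simp: sgn_if abs_if)
  have "xs @ ys \<in> signed_perms k"
  proof -
    have d: "distinct (map abs (xs @ ys))" and nn: "int k + 1 \<notin> set (map abs (xs @ ys))"
      using dt txy x by auto
    have "insert (int k + 1) (set (map abs (xs @ ys))) = int ` {1..Suc k}" using st txy x by auto
    then have "set (map abs (xs @ ys)) = int ` {1..Suc k} - {int k + 1}" using nn by blast
    also have "\<dots> = int ` {1..k}" by force
    finally show ?thesis using d unfolding signed_perms_def by (simp add: image_Un)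
  qed
  moreover have "length xs \<le> k" using sp_len[OF calculation] by simp
  ultimately show "t \<in> (\<lambda>(p,j,e). take j p @ (e * (int k + 1)) # drop j p) ` (signed_perms k \<times> {0..k} \<times> {1,-1})"
    using txy xe e1 by (intro rev_image_eqI[of "(xs @ ys, length xs, e)"]) auto
next
  fix t assume "t \<in> (\<lambda>(p,j,e). take j p @ (e * (int k + 1)) # drop j p) ` (signed_perms k \<times> {0..k} \<times> {1,-1})"
  then obtain p j e where p: "p \<in> signed_perms k" and e: "e \<in> {1,-1}" and t: "t = take j p @ (e * (int k + 1)) # drop j p" by auto
  have ds: "distinct (map abs p)" and ss: "set (map abs p) = int ` {1..k}" using p unfolding signed_perms_def by auto
  have ae: "\<bar>e * (int k + 1)\<bar> = int k + 1" using e by auto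
  have "distinct (map abs (take j p) @ map abs (drop j p))" "set (map abs (take j p) @ map abs (drop j p)) = int ` {1..k}"
    using ds ss by (simp_all only: map_append[symmetric] append_take_drop_id)
  moreover have "int k + 1 \<notin> set (map abs (take j p))" "int k + 1 \<notin> set (map abs (drop j p))"
    using sp_abs[OF p] by (force dest!: in_set_takeD in_set_dropD)+
  moreover have "int ` {1..Suc k} = insert (int k + 1) (int ` {1..k})"
  proof -
    have "{1..Suc k} = insert (Suc k) {1..k}" by auto
    then show ?thesis by (simp add: add.commute)
  qed
  ultimately show "t \<in> signed_perms (Suc k)" unfolding signed_perms_def t
    using ae by (auto simp del: append_take_drop_id)
qed

lemma sp_Suc_inj:
  "inj_on (\<lambda>(p,j,e). take j p @ (e * (int k + 1)) # drop j p) (signed_perms k \<times> {0..k} \<times> {1,-1})"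
proof (rule inj_onI)
  fix x y
  assume xA: "x \<in> signed_perms k \<times> {0..k} \<times> {1,-1}" and yA: "y \<in> signed_perms k \<times> {0..k} \<times> {1,-1}"
    and fxy: "(\<lambda>(p,j,e). take j p @ (e * (int k + 1)) # drop j p) x = (\<lambda>(p,j,e). take j p @ (e * (int k + 1)) # drop j p) y"
  obtain p j e where x: "x = (p, j, e)" by (cases x) auto
  obtain p' j' e' where y: "y = (p', j', e')" by (cases y) auto
  have p: "p \<in> signed_perms k" and j: "j \<in> {0..k}" and e: "e \<in> {1,-1}" using xA x by auto
  have p': "p' \<in> signed_perms k" and j': "j' \<in> {0..k}" and e': "e' \<in> {1,-1::int}" using yA y by auto
  have eq: "take j p @ (e * (int k + 1)) # drop j p = take j' p' @ (e' * (int k + 1)) # drop j' p'"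
    using fxy x y by simp
  have ss: "set (map abs p) = int ` {1..k}" using p unfolding signed_perms_def by auto
  have ae: "\<bar>e * (int k + 1)\<bar> = int k + 1" "\<bar>e' * (int k + 1)\<bar> = int k + 1" using e e' by auto
  have n1: "int k + 1 \<notin> set (map abs (take j p))" "int k + 1 \<notin> set (map abs (drop j p))"
    using sp_abs[OF p] by (force dest!: in_set_takeD in_set_dropD)+
  have "map abs (take j p) @ (int k + 1) # map abs (drop j p) = map abs (take j' p') @ (int k + 1) # map abs (drop j' p')"
    using arg_cong[OF eq, of "map abs"] ae by simp
  then have "map abs (take j p) = map abs (take j' p')"
    using append_Cons_eq_iff[OF n1] by blast
  then have "length (take j p) = length (take j' p')" by (metis length_map)
  moreover have lp: "length p = k" "length p' = k" using p p' sp_len by auto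
  ultimately have jj: "j = j'" using j j' by simp
  have lt: "length (take j p) = length (take j' p')" using jj lp by simp
  from eq have "take j p = take j' p'" "e * (int k + 1) = e' * (int k + 1)" "drop j p = drop j' p'"
    using append_eq_append_conv[OF disjI1[OF lt]] by auto
  then have tk: "take j p = take j' p'" and dr: "drop j p = drop j' p'" and ee: "e * (int k + 1) = e' * (int k + 1)"
    by auto
  have "p = take j p @ drop j p" by simp
  also have "\<dots> = take j' p' @ drop j' p'" using tk dr by simp
  also have "\<dots> = p'" by simp
  finally have pp: "p = p'" .
  have "int k + 1 \<noteq> 0" by simp
  then have eq3: "e = e'" using ee by simp
  show "x = y" using jj pp eq3 x y by simp
qed

definition FB :: "nat \<Rightarrow> real fps" where
  "FB k = (\<Sum>p\<in>signed_perms k. fps_X ^ desB p)"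

lemma deriv_Xpow: "fps_deriv ((fps_X::'a::comm_ring_1 fps) ^ m) * fps_X = of_nat m * fps_X ^ m"
proof (cases m)
  case 0 then show ?thesis by simp
next
  case (Suc m')
  then have "fps_deriv ((fps_X::'a fps) ^ m) = of_nat m * fps_X ^ m'"
    using deriv_Xpow_Suc[of m'] by simp
  then show ?thesis unfolding Suc by (simp add: power_Suc2 mult.assoc)
qed

lemma FB_rec:
  "FB (Suc k) = (1 + of_nat (2 * k + 1) * fps_X) * FB k + 2 * fps_X * (1 - fps_X) * fps_deriv (FB k)"
proof -
  have "FB (Suc k) = (\<Sum>(p,j,e)\<in>signed_perms k \<times> {0..k} \<times> {1,-1}. fps_X ^ desB (take j p @ (e * (int k + 1)) # drop j p))"
    unfolding FB_def sp_Suc by (subst sum.reindex[OF sp_Suc_inj]) (simp add: case_prod_unfold)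
  also have "\<dots> = (\<Sum>p\<in>signed_perms k. \<Sum>(j,e)\<in>{0..k} \<times> {1,-1}. fps_X ^ desB (take j p @ (e * (int k + 1)) # drop j p))"
    by (subst sum.cartesian_product[symmetric]) (simp add: case_prod_unfold)
  also have "\<dots> = (\<Sum>p\<in>signed_perms k. \<Sum>j=0..k. \<Sum>e\<in>{1,-1}. fps_X ^ desB (take j p @ (e * (int k + 1)) # drop j p))"
    by (subst sum.cartesian_product[symmetric]) (simp add: case_prod_unfold)
  also have "\<dots> = (\<Sum>p\<in>signed_perms k. (1 + of_nat (2 * k + 1) * fps_X) * fps_X ^ desB p
        + 2 * fps_X * (1 - fps_X) * fps_deriv (fps_X ^ desB p))"
  proof (rule sum.cong[OF refl])
    fix p assume p: "p \<in> signed_perms k"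
    have le: "desB p \<le> k" using desB_le[of p] sp_len[OF p] by simp
    have "(\<Sum>j=0..k. \<Sum>e\<in>{1,-1}. (fps_X::real fps) ^ desB (take j p @ (e * (int k + 1)) # drop j p))
       = (\<Sum>j=0..k. (fps_X::real fps) ^ desB (take j p @ (int k + 1) # drop j p)
              + fps_X ^ desB (take j p @ (- (int k + 1)) # drop j p))"
      by simp
    also have "\<dots> = of_nat (2 * desB p + 1) * fps_X ^ desB p + of_nat (2 * k + 1 - 2 * desB p) * fps_X ^ (desB p + 1)"
      by (rule ins_sum_B[OF p])
    also have "\<dots> = (1 + of_nat (2 * k + 1) * fps_X) * fps_X ^ desB p
        + 2 * fps_X * (1 - fps_X) * fps_deriv (fps_X ^ desB p)"
    proof -
      have "2 * fps_X * (1 - fps_X) * fps_deriv ((fps_X::real fps) ^ desB p)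
          = 2 * (1 - fps_X) * (fps_deriv ((fps_X::real fps) ^ desB p) * fps_X)"
        by (simp only: mult_ac)
      also have "\<dots> = 2 * (1 - fps_X) * (of_nat (desB p) * fps_X ^ desB p)"
        by (simp only: deriv_Xpow)
      finally have d: "2 * fps_X * (1 - fps_X) * fps_deriv ((fps_X::real fps) ^ desB p)
          = 2 * (1 - fps_X) * (of_nat (desB p) * fps_X ^ desB p)" .
      show ?thesis unfolding d using le by (simp add: of_nat_diff algebra_simps)
    qed
    finally show "(\<Sum>j=0..k. \<Sum>e\<in>{1,-1}. (fps_X::real fps) ^ desB (take j p @ (e * (int k + 1)) # drop j p))
       = (1 + of_nat (2 * k + 1) * fps_X) * fps_X ^ desB p
        + 2 * fps_X * (1 - fps_X) * fps_deriv (fps_X ^ desB p)" .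
  qed
  also have "\<dots> = (1 + of_nat (2 * k + 1) * fps_X) * FB k + 2 * fps_X * (1 - fps_X) * fps_deriv (FB k)"
    unfolding FB_def by (simp only: sum.distrib sum_distrib_left fps_deriv_sum)
  finally show ?thesis .
qed

lemma FB_0: "FB 0 = 1"
proof -
  have "signed_perms 0 = {[]}" unfolding signed_perms_def by auto
  then show ?thesis unfolding FB_def by (simp add: desB_def)
qed


definition G :: "nat \<Rightarrow> real fps" where
  "G n = Abs_fps (\<lambda>m. if m = 0 then 0 else of_nat m ^ n)"

definition K :: "nat \<Rightarrow> real fps" where
  "K k = Abs_fps (\<lambda>m. (2 * of_nat m + 1) ^ k)"

lemma G_Suc: "G (Suc n) = fps_X * fps_deriv (G n)"
  by (rule fps_ext) (auto simp: G_def)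

lemma K_Suc: "K (Suc k) = K k + fps_const 2 * (fps_X * fps_deriv (K k))"
  by (rule fps_ext) (auto simp: K_def algebra_simps)

lemma G_0: "(1 - fps_X) * G 0 = fps_X"
  by (rule fps_ext) (auto simp: G_def left_diff_distrib fps_X_nth)

lemma K_0: "(1 - fps_X) * K 0 = 1"
  by (rule fps_ext) (auto simp: K_def left_diff_distrib fps_X_nth)

lemma deriv_1mX_pow: "fps_deriv ((1 - fps_X :: real fps) ^ Suc n) = - (of_nat (Suc n) * (1 - fps_X) ^ n)"
  by (simp only: fps_deriv_power') (simp add: algebra_simps)

lemma alg1: "(c::'a::comm_ring_1) * x * (y * p * g) + x * y * (- (c * p) * g + y * p * g') = (y * (y * p)) * (x * g')"
  by (simp add: algebra_simps)

lemma alg2: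
  fixes c :: "'a::comm_ring_1"
  assumes "c = 2 * s - 1" "y = 1 - x" "t = 2"
  shows "(1 + c * x) * (y * p * g) + 2 * x * y * (- (s * p) * g + y * p * g') = (y * (y * p)) * (g + t * (x * g'))"
  unfolding assms by (simp add: algebra_simps)

lemma FA_closed: "FA n = (1 - fps_X) ^ (Suc n) * G n"
proof (induction n)
  case 0 then show ?case using G_0 by (simp add: FA_0)
next
  case (Suc n)
  have d: "fps_deriv (FA n) = - (of_nat (Suc n) * (1 - fps_X) ^ n) * G n + (1 - fps_X) ^ Suc n * fps_deriv (G n)"
    unfolding Suc fps_deriv_mult deriv_1mX_pow by (rule add.commute)
  have e: "FA (Suc n) = of_nat (Suc n) * fps_X * ((1 - fps_X) * (1-fps_X)^n * G n) + fps_X * (1 - fps_X) * (- (of_nat (Suc n) * (1 - fps_X) ^ n) * G n + ((1 - fps_X) * (1-fps_X)^n) * fps_deriv (G n))"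
    unfolding FA_rec d unfolding Suc power_Suc ..
  show ?case unfolding e G_Suc power_Suc by (rule alg1)
qed

lemma FB_closed: "FB k = (1 - fps_X) ^ (Suc k) * K k"
proof (induction k)
  case 0 then show ?case using K_0 by (simp add: FB_0)
next
  case (Suc k)
  have d: "fps_deriv (FB k) = - (of_nat (Suc k) * (1 - fps_X) ^ k) * K k + (1 - fps_X) ^ Suc k * fps_deriv (K k)"
    unfolding Suc fps_deriv_mult deriv_1mX_pow by (rule add.commute)
  have e: "FB (Suc k) = (1 + of_nat (2 * k + 1) * fps_X) * ((1 - fps_X) * (1-fps_X)^k * K k) + 2 * fps_X * (1 - fps_X) * (- (of_nat (Suc k) * (1 - fps_X) ^ k) * K k + ((1 - fps_X) * (1-fps_X)^k) * fps_deriv (K k))"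
    unfolding FB_rec d unfolding Suc power_Suc ..
  show ?case unfolding e K_Suc power_Suc
    by (rule alg2) (simp_all add: fps_numeral_fps_const ring_distribs)
qed



definition H :: "nat \<Rightarrow> real fps" where
  "H n = (\<Sum>k=0..n. fps_const (real (n choose k)) * (K k * K (n - k)))"

lemma H_nth: "H n $ m = 2 ^ n * (real m + 1) ^ (n + 1)"
proof -
  have "H n $ m = (\<Sum>k=0..n. real (n choose k) * (\<Sum>i=0..m. (2 * real i + 1) ^ k * (2 * real (m - i) + 1) ^ (n - k)))"
    unfolding H_def fps_sum_nth fps_mult_left_const_nth by (simp add: fps_mult_nth K_def)
  also have "\<dots> = (\<Sum>k=0..n. \<Sum>i=0..m. real (n choose k) * ((2 * real i + 1) ^ k * (2 * real (m - i) + 1) ^ (n - k)))"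
    by (simp only: sum_distrib_left)
  also have "\<dots> = (\<Sum>i=0..m. \<Sum>k=0..n. real (n choose k) * ((2 * real i + 1) ^ k * (2 * real (m - i) + 1) ^ (n - k)))"
    by (rule sum.swap)
  also have "\<dots> = (\<Sum>i=0..m. ((2 * real i + 1) + (2 * real (m - i) + 1)) ^ n)"
  proof -
    have bin: "\<And>a b::real. (\<Sum>k=0..n. real (n choose k) * (a ^ k * b ^ (n - k))) = (a + b) ^ n"
      by (simp add: binomial_ring atMost_atLeast0 mult.assoc)
    show ?thesis by (simp only: bin)
  qed
  also have "\<dots> = (\<Sum>i=0..m. (2 * (real m + 1)) ^ n)"
    by (rule sum.cong) (auto simp: of_nat_diff algebra_simps)
  also have "\<dots> = 2 ^ n * (real m + 1) ^ (n + 1)"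
    by (simp only: power_mult_distrib sum_constant card_atLeastAtMost) (simp add: algebra_simps)
  finally show ?thesis .
qed

lemma G_H: "fps_const (2 ^ n) * G (Suc n) = fps_X * H n"
proof (rule fps_ext)
  fix m
  show "(fps_const (2 ^ n) * G (Suc n)) $ m = (fps_X * H n) $ m"
    by (cases m) (simp_all add: G_def H_nth add.commute)
qed

lemma fps_main:
  "fps_const (2 ^ n) * FA (Suc n) = fps_X * (\<Sum>k=0..n. fps_const (real (n choose k)) * (FB k * FB (n - k)))"
proof -
  have "(\<Sum>k=0..n. fps_const (real (n choose k)) * (FB k * FB (n - k)))
      = (\<Sum>k=0..n. (1 - fps_X) ^ Suc (Suc n) * (fps_const (real (n choose k)) * (K k * K (n - k))))"
  proof (rule sum.cong[OF refl])
    fix k assume "k \<in> {0..n}"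
    then have kn: "k \<le> n" by simp
    have "(1 - fps_X :: real fps) ^ Suc k * (1 - fps_X) ^ Suc (n - k) = (1 - fps_X) ^ Suc (Suc n)"
      unfolding power_add[symmetric] using kn by simp
    then show "fps_const (real (n choose k)) * (FB k * FB (n - k)) =
        (1 - fps_X) ^ Suc (Suc n) * (fps_const (real (n choose k)) * (K k * K (n - k)))"
      unfolding FB_closed \<open>_ = (1 - fps_X) ^ Suc (Suc n)\<close>[symmetric] by (simp only: mult_ac)
  qed
  also have "\<dots> = (1 - fps_X) ^ Suc (Suc n) * H n"
    unfolding H_def by (simp only: sum_distrib_left)
  finally have r: "(\<Sum>k=0..n. fps_const (real (n choose k)) * (FB k * FB (n - k))) = (1 - fps_X) ^ Suc (Suc n) * H n" .
  have "fps_const (2 ^ n) * FA (Suc n) = (1 - fps_X) ^ Suc (Suc n) * (fps_const (2 ^ n) * G (Suc n))"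
    unfolding FA_closed by (simp only: mult_ac)
  also have "\<dots> = fps_X * ((1 - fps_X) ^ Suc (Suc n) * H n)"
    unfolding G_H by (simp only: mult_ac)
  finally show ?thesis unfolding r .
qed

definition PA :: "nat \<Rightarrow> real poly" where
  "PA n = (\<Sum>s\<in>perms n. monom 1 (des s + 1))"

definition PB :: "nat \<Rightarrow> real poly" where
  "PB k = (\<Sum>p\<in>signed_perms k. monom 1 (desB p))"

lemma fps_PA: "fps_of_poly (PA n) = FA n"
  unfolding PA_def FA_def fps_of_poly_sum fps_of_poly_monom' ..

lemma fps_PB: "fps_of_poly (PB n) = FB n"
  unfolding PB_def FB_def fps_of_poly_sum fps_of_poly_monom' ..

lemma poly_PA: "poly (PA n) z = eulerA n z"
  by (simp add: PA_def eulerA_def poly_sum poly_monom)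

lemma poly_PB: "poly (PB n) z = eulerB n z"
  by (simp add: PB_def eulerB_def poly_sum poly_monom)

lemma poly_main:
  "smult (2 ^ n) (PA (Suc n)) = monom 1 1 * (\<Sum>k=0..n. smult (real (n choose k)) (PB k * PB (n - k)))"
proof -
  have l: "fps_of_poly (smult (2 ^ n) (PA (Suc n))) = fps_const (2 ^ n) * FA (Suc n)"
    by (simp only: fps_of_poly_smult fps_PA)
  have r: "fps_of_poly (monom 1 1 * (\<Sum>k=0..n. smult (real (n choose k)) (PB k * PB (n - k))))
     = fps_X * (\<Sum>k=0..n. fps_const (real (n choose k)) * (FB k * FB (n - k)))"
    by (simp only: fps_of_poly_mult fps_of_poly_sum fps_of_poly_smult fps_PB fps_of_poly_monom' power_one_right)
  have "fps_of_poly (smult (2 ^ n) (PA (Suc n))) = fps_of_poly (monom 1 1 * (\<Sum>k=0..n. smult (real (n choose k)) (PB k * PB (n - k))))"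
    unfolding l r by (rule fps_main)
  then show ?thesis by (simp only: fps_of_poly_eq_iff)
qed

theorem mainTheorem17:
  fixes n :: nat and z :: real
  assumes "n \<ge> 1" and "z \<noteq> 0"
  shows "2 ^ n * eulerA (n + 1) z / z = (\<Sum>k=0..n. real (n choose k) * eulerB k z * eulerB (n - k) z)"
proof -
  have "poly (smult (2 ^ n) (PA (Suc n))) z = poly (monom 1 1 * (\<Sum>k=0..n. smult (real (n choose k)) (PB k * PB (n - k)))) z"
    by (simp only: poly_main)
  then have "2 ^ n * eulerA (n + 1) z = z * (\<Sum>k=0..n. real (n choose k) * eulerB k z * eulerB (n - k) z)"
    by (simp only: poly_smult poly_mult poly_sum poly_monom poly_PA poly_PB Suc_eq_plus1) (simp add: mult.assoc)
  then show ?thesis using assms(2) by (simp add: field_simps)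
qed

end
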